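(* Let $J\subset\mathbb{C}$ be a Jordan curve and let $\gamma:\mathbb{R}/2\pi\mathbb{Z}\to\mathbb{C}$ be a homeomorphic parametrization of $J$ (which fixes the orientation of $J$) with $\gamma(0)=A_0$. Assume that $J$ has continuously turning tangents in a neighborhood of $A_0$. Let $n\ge 3$ and let $a_1,\dots,a_n>0$ satisfy $a_i<\sum_{j\neq i}a_j$ for every $i=1,\dots,n$. Then there exist parameters $0=\sigma_0<\sigma_1<\dots<\sigma_{n-1}<\sigma_n=2\pi$ and a number $\lambda>0$ such that \[ |\gamma(\sigma_i)-\gamma(\sigma_{i-1})|=\lambda a_i\quad\text{for } i=1,\dots,n . \] Equivalently, there is a neatly $J$-cyclic polygon with consecutive side lengths $a_1,\dots,a_n$ whose inscribed similar copy has starting vertex $A_0$.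
   Context: A polygon $Q_n=A_0A_1\cdots A_{n-1}$ is an oriented closed piecewise linear curve with vertices $A_0,\dots,A_{n-1}$ and sides $A_0A_1,\dots,A_{n-2}A_{n-1},A_{n-1}A_0$. For an oriented Jordan curve $J$, $Q_n$ is called neatly $J$-cyclic if it has a similar copy $A_0'A_1'\cdots A_{n-1}'$ whose vertices lie on $J$ and are arranged on $J$ in this order according to the orientation of $J$. "$J$ has continuously turning tangents in a neighborhood of $A_0$" means: there is an open arc $B\subset J$ containing $A_0$ admitting a parametrization $h:(\alpha,\beta)\to B$ that is continuously differentiable with $h'(t)\neq 0$ for all $t$. *)

theory Defs
  imports "HOL-Analysis.Analysis"
begin

text \<open>A homeomorphic parametrization of a Jordan curve by the circle R/2piZ,
  represented as a continuous 2pi-periodic function on R that is injective on [0,2pi).\<close>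
definition circle_param :: "(real \<Rightarrow> complex) \<Rightarrow> bool" where
  "circle_param \<gamma> \<longleftrightarrow> continuous_on UNIV \<gamma> \<and> (\<forall>t. \<gamma> (t + 2*pi) = \<gamma> t)
     \<and> inj_on \<gamma> {0..<2*pi}"

definition cont_turning_tangents_at :: "complex set \<Rightarrow> complex \<Rightarrow> bool" where
  "cont_turning_tangents_at J A \<longleftrightarrow>
     (\<exists>B \<alpha> \<beta> h h' k. B \<subseteq> J \<and> A \<in> B \<and> openin (top_of_set J) B \<and> \<alpha> < \<beta> \<and>
        homeomorphism {\<alpha><..<\<beta>} B h k \<and>
        (\<forall>t\<in>{\<alpha><..<\<beta>}. (h has_vector_derivative h' t) (at t) \<and> h' t \<noteq> 0) \<and>
        continuous_on {\<alpha><..<\<beta>} h')"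

end

theory Submission
  imports Defs
begin


lemma brouwer_nat:
  fixes f :: "(nat \<Rightarrow> real) \<Rightarrow> (nat \<Rightarrow> real)" and m :: nat
  defines "C \<equiv> {x. (\<forall>i<m. 0 \<le> x i \<and> x i \<le> 1) \<and> (\<forall>i. m \<le> i \<longrightarrow> x i = 0)}"
  assumes cont: "\<And>i. i < m \<Longrightarrow> continuous_on C (\<lambda>x. f x i)"
    and maps: "\<And>x i. x \<in> C \<Longrightarrow> i < m \<Longrightarrow> 0 \<le> f x i \<and> f x i \<le> 1"
  shows "\<exists>x\<in>C. \<forall>i<m. f x i = x i"
proof -
  define emb where "emb p y = (\<lambda>i. if i < m then real (y i) / real p else (0::real))" for p and y :: "nat \<Rightarrow> nat"
  have emb_C: "emb p y \<in> C" if "p > 0" "\<forall>i<m. y i \<le> p" for p y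
    using that by (auto simp: C_def emb_def divide_le_eq_1)
  define Good where "Good k z A B \<longleftrightarrow> z \<in> C \<and> (\<forall>i<m. A i \<in> C \<and> B i \<in> C \<and>
        (\<forall>j<m. \<bar>A i j - z j\<bar> \<le> 1 / real (Suc k) \<and> \<bar>B i j - z j\<bar> \<le> 1 / real (Suc k)) \<and>
        A i i \<le> f (A i) i \<and> f (B i) i \<le> B i i)" for k z and A B :: "nat \<Rightarrow> nat \<Rightarrow> real"
  have step: "\<exists>z A B. Good k z A B" for k
  proof -
    define p where "p = Suc k"
    have p0: "0 < p" by (simp add: p_def)
    define label where "label y i = (if y i = 0 \<or> (y i \<noteq> p \<and> emb p y i \<le> f (emb p y) i) then 0 else (1::nat))" for y i
    obtain q where q1: "\<forall>i<m. q i < p"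
      and q2: "\<forall>i<m. \<exists>r s. (\<forall>j<m. q j \<le> r j \<and> r j \<le> q j + 1) \<and> (\<forall>j<m. q j \<le> s j \<and> s j \<le> q j + 1) \<and> label r i \<noteq> label s i"
      by (rule kuhn_lemma[OF p0, of m label]) (use p0 in \<open>auto simp: label_def\<close>)
    have lab0: "emb p y i \<le> f (emb p y) i" if "label y i = 0" "\<forall>j<m. y j \<le> p" "i < m" for y i
    proof (cases "y i = 0")
      case True
      then show ?thesis using maps[OF emb_C[OF p0 that(2)] that(3)] by (simp add: emb_def)
    next
      case False
      then show ?thesis using that(1) by (auto simp: label_def split: if_splits)
    qed
    have lab1: "f (emb p y) i \<le> emb p y i" if "label y i \<noteq> 0" "\<forall>j<m. y j \<le> p" "i < m" for y i
    proof (cases "y i = p")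
      case True
      then show ?thesis using maps[OF emb_C[OF p0 that(2)] that(3)] p0 that(3) by (simp add: emb_def)
    next
      case False
      then show ?thesis using that(1) by (auto simp: label_def split: if_splits)
    qed
    have near: "\<bar>emb p y j - emb p q j\<bar> \<le> 1 / real (Suc k)" if "\<forall>j<m. q j \<le> y j \<and> y j \<le> q j + 1" for y j
    proof (cases "j < m")
      case True
      then have "real (q j) \<le> real (y j)" "real (y j) \<le> real (q j) + 1" using that by auto
      then have "\<bar>real (y j) - real (q j)\<bar> \<le> 1" by auto
      then show ?thesis using True p0 by (simp add: emb_def p_def diff_divide_distrib[symmetric] abs_divide divide_right_mono)
    qed (simp add: emb_def)
    have "\<forall>i. \<exists>AB. i < m \<longrightarrow> (fst AB \<in> C \<and> snd AB \<in> C \<and>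
        (\<forall>j<m. \<bar>fst AB j - emb p q j\<bar> \<le> 1 / real (Suc k) \<and> \<bar>snd AB j - emb p q j\<bar> \<le> 1 / real (Suc k)) \<and>
        fst AB i \<le> f (fst AB) i \<and> f (snd AB) i \<le> snd AB i)"
    proof (intro allI impI)
      fix i
      show "\<exists>AB. i < m \<longrightarrow> (fst AB \<in> C \<and> snd AB \<in> C \<and>
        (\<forall>j<m. \<bar>fst AB j - emb p q j\<bar> \<le> 1 / real (Suc k) \<and> \<bar>snd AB j - emb p q j\<bar> \<le> 1 / real (Suc k)) \<and>
        fst AB i \<le> f (fst AB) i \<and> f (snd AB) i \<le> snd AB i)"
      proof (cases "i < m")
        case False then show ?thesis by simp
      next
        case True
        then obtain r s where rs: "\<forall>j<m. q j \<le> r j \<and> r j \<le> q j + 1" "\<forall>j<m. q j \<le> s j \<and> s j \<le> q j + 1"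
          "label r i \<noteq> label s i" using q2 by blast
        have rp: "\<forall>j<m. r j \<le> p" "\<forall>j<m. s j \<le> p" using rs(1,2) q1 by (auto simp: Suc_le_eq intro: order_trans)
        show ?thesis
        proof (cases "label r i = 0")
          case True
          then have "label s i \<noteq> 0" using rs(3) by simp
          then show ?thesis
            apply (intro exI[of _ "(emb p r, emb p s)"])
            using True lab0[OF True rp(1) \<open>i<m\<close>] lab1[OF _ rp(2) \<open>i<m\<close>] emb_C[OF p0 rp(1)] emb_C[OF p0 rp(2)]
              near[OF rs(1)] near[OF rs(2)] by auto
        next
          case False
          then have "label s i = 0" using rs(3) by (simp add: label_def split: if_splits)
          then show ?thesis
            apply (intro exI[of _ "(emb p s, emb p r)"])
            using False lab0[OF _ rp(2) \<open>i<m\<close>] lab1[OF False rp(1) \<open>i<m\<close>] emb_C[OF p0 rp(1)] emb_C[OF p0 rp(2)]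
              near[OF rs(1)] near[OF rs(2)] by auto
        qed
      qed
    qed
    then obtain AB where AB: "\<forall>i. i < m \<longrightarrow> (fst (AB i) \<in> C \<and> snd (AB i) \<in> C \<and>
        (\<forall>j<m. \<bar>fst (AB i) j - emb p q j\<bar> \<le> 1 / real (Suc k) \<and> \<bar>snd (AB i) j - emb p q j\<bar> \<le> 1 / real (Suc k)) \<and>
        fst (AB i) i \<le> f (fst (AB i)) i \<and> f (snd (AB i)) i \<le> snd (AB i) i)"
      by (metis choice)
    have "emb p q \<in> C" using emb_C[OF p0] q1 by (simp add: less_imp_le)
    show ?thesis
      apply (rule exI[of _ "emb p q"], rule exI[of _ "\<lambda>i. fst (AB i)"], rule exI[of _ "\<lambda>i. snd (AB i)"])
      using AB \<open>emb p q \<in> C\<close> unfolding Good_def by simp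
  qed
  have "\<forall>k. \<exists>t. Good k (fst t) (fst (snd t)) (snd (snd t))"
  proof
    fix k
    obtain z A B where "Good k z A B" using step[of k] by blast
    then show "\<exists>t. Good k (fst t) (fst (snd t)) (snd (snd t))" by (intro exI[of _ "(z, A, B)"]) simp
  qed
  then obtain T where T: "\<forall>k. Good k (fst (T k)) (fst (snd (T k))) (snd (snd (T k)))"
    by (rule choice[THEN exE])
  define Z where "Z k = fst (T k)" for k
  define A where "A k = fst (snd (T k))" for k
  define B where "B k = snd (snd (T k))" for k
  have ZAB: "\<And>k. Z k \<in> C" "\<And>k i. i < m \<Longrightarrow> A k i \<in> C \<and> B k i \<in> C \<and>
        (\<forall>j<m. \<bar>A k i j - Z k j\<bar> \<le> 1 / real (Suc k) \<and> \<bar>B k i j - Z k j\<bar> \<le> 1 / real (Suc k)) \<and>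
        A k i i \<le> f (A k i) i \<and> f (B k i) i \<le> B k i i"
  proof -
    have G: "Good k (Z k) (A k) (B k)" for k using T by (simp add: Z_def A_def B_def)
    show "Z k \<in> C" for k using G[of k] unfolding Good_def by blast
    show "A k i \<in> C \<and> B k i \<in> C \<and>
        (\<forall>j<m. \<bar>A k i j - Z k j\<bar> \<le> 1 / real (Suc k) \<and> \<bar>B k i j - Z k j\<bar> \<le> 1 / real (Suc k)) \<and>
        A k i i \<le> f (A k i) i \<and> f (B k i) i \<le> B k i i" if "i < m" for k i
      using G[of k] that unfolding Good_def by blast
  qed
  have CPi: "C = Pi\<^sub>E UNIV (\<lambda>i. if i < m then {0..1} else {0})"
  proof (rule set_eqI, rule iffI)
    fix x assume x: "x \<in> C"
    have "x i \<in> (if i < m then {0..1} else {0})" for i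
      using x by (cases "i < m") (auto simp: C_def)
    then show "x \<in> Pi\<^sub>E UNIV (\<lambda>i. if i < m then {0..1} else {0})"
      by (simp add: PiE_iff)
  next
    fix x assume x: "x \<in> Pi\<^sub>E UNIV (\<lambda>i. if i < m then {0..1::real} else {0})"
    have xi: "x i \<in> (if i < m then {0..1} else {0})" for i using x by (simp add: PiE_iff)
    show "x \<in> C" unfolding C_def
    proof (intro CollectI conjI allI impI)
      fix i assume "i < m" then show "0 \<le> x i" "x i \<le> 1" using xi[of i] by auto
    next
      fix i assume "m \<le> i" then show "x i = 0" using xi[of i] by auto
    qed
  qed
  have "compact C"
  proof -
    have "compactin (product_topology (\<lambda>i. euclidean) UNIV) (Pi\<^sub>E UNIV (\<lambda>i. if i < m then {0..1::real} else {0}))"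
      by (subst compactin_PiE) auto
    then show ?thesis unfolding CPi euclidean_product_topology by simp
  qed
  then obtain z r where z: "z \<in> C" and r: "strict_mono r" and lim: "(Z \<circ> r) \<longlonglongrightarrow> z"
    using compact_imp_seq_compact[of C, unfolded seq_compact_def] ZAB(1) by metis
  have limc: "(\<lambda>k. Z (r k) j) \<longlonglongrightarrow> z j" for j
  proof -
    have "((\<lambda>x. x j) \<circ> (Z \<circ> r)) \<longlonglongrightarrow> z j"
      using continuous_on_tendsto_compose[OF continuous_on_product_coordinates lim] by (simp add: o_def)
    then show ?thesis by (simp add: o_def)
  qed
  have small: "(\<lambda>k. 1 / real (Suc (r k))) \<longlonglongrightarrow> 0"
  proof -
    have "(\<lambda>k. 1 / real (Suc k)) \<longlonglongrightarrow> 0" by (rule LIMSEQ_inverse_real_of_nat[unfolded inverse_eq_divide])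
    from LIMSEQ_subseq_LIMSEQ[OF this r] show ?thesis by (simp add: o_def)
  qed
  have conv: "(\<lambda>k. Y k) \<longlonglongrightarrow> z" if Y: "\<And>k. Y k \<in> C" "\<And>k j. j < m \<Longrightarrow> \<bar>Y k j - Z (r k) j\<bar> \<le> 1 / real (Suc (r k))" for Y
  proof -
    have "limitin (product_topology (\<lambda>i. euclidean) UNIV) Y z sequentially"
    proof (subst limitin_componentwise, intro conjI ballI)
      show "\<forall>\<^sub>F a in sequentially. Y a \<in> topspace (product_topology (\<lambda>i. euclidean) UNIV)" by simp
      fix j :: nat
      show "limitin euclidean (\<lambda>c. Y c j) (z j) sequentially"
      proof (cases "j < m")
        case True
        have "(\<lambda>k. Y k j - Z (r k) j) \<longlonglongrightarrow> 0"
          by (rule tendsto_0_le[OF small, of _ 1]) (use Y(2)[OF True] in auto)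
        from tendsto_add[OF this limc[of j]] show ?thesis by simp
      next
        case False
        then have "Y k j = 0" "z j = 0" for k using Y(1)[of k] z by (auto simp: C_def)
        then show ?thesis by simp
      qed
    qed simp
    then show ?thesis unfolding euclidean_product_topology by simp
  qed
  have "\<forall>i<m. f z i = z i"
  proof (intro allI impI)
    fix i assume i: "i < m"
    have YA: "(\<lambda>k. A (r k) i) \<longlonglongrightarrow> z" and YB: "(\<lambda>k. B (r k) i) \<longlonglongrightarrow> z"
      using ZAB(2)[OF i] by (auto intro!: conv)
    have fA: "(\<lambda>k. f (A (r k) i) i) \<longlonglongrightarrow> f z i"
      by (rule continuous_on_tendsto_compose[OF cont[OF i] YA z]) (use ZAB(2)[OF i] in auto)
    have fB: "(\<lambda>k. f (B (r k) i) i) \<longlonglongrightarrow> f z i"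
      by (rule continuous_on_tendsto_compose[OF cont[OF i] YB z]) (use ZAB(2)[OF i] in auto)
    have cA: "(\<lambda>k. A (r k) i i) \<longlonglongrightarrow> z i"
      using continuous_on_tendsto_compose[OF continuous_on_product_coordinates YA, of i] by simp
    have cB: "(\<lambda>k. B (r k) i i) \<longlonglongrightarrow> z i"
      using continuous_on_tendsto_compose[OF continuous_on_product_coordinates YB, of i] by simp
    have "z i \<le> f z i" by (rule LIMSEQ_le[OF cA fA]) (use ZAB(2)[OF i] in auto)
    moreover have "f z i \<le> z i" by (rule LIMSEQ_le[OF fB cB]) (use ZAB(2)[OF i] in auto)
    ultimately show "f z i = z i" by simp
  qed
  then show ?thesis using z by blast
qed


lemma local_inj:
  assumes "circle_param \<gamma>" "s \<in> {-pi/2..pi/2}" "t \<in> {-pi/2..pi/2}" "\<gamma> s = \<gamma> t"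
  shows "s = t"
proof -
  have per: "\<gamma> (x + 2*pi) = \<gamma> x" for x using assms(1) by (simp add: circle_param_def)
  have inj: "inj_on \<gamma> {0..<2*pi}" using assms(1) by (simp add: circle_param_def)
  define s' where "s' = (if s < 0 then s + 2*pi else s)"
  define t' where "t' = (if t < 0 then t + 2*pi else t)"
  have g: "\<gamma> s' = \<gamma> s" "\<gamma> t' = \<gamma> t" by (auto simp: s'_def t'_def per)
  have s2: "-pi/2 \<le> s \<and> s \<le> pi/2" "-pi/2 \<le> t \<and> t \<le> pi/2" using assms(2,3) by auto
  have pp: "pi > 0" by (rule pi_gt_zero)
  have "0 \<le> s' \<and> s' < 2*pi"
  proof (cases "s < 0")
    case True then have "s' = s + 2*pi" by (simp add: s'_def)
    then show ?thesis using s2 pp True by linarith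
  next
    case False then have "s' = s" by (simp add: s'_def)
    then show ?thesis using s2 pp False by linarith
  qed
  moreover have "0 \<le> t' \<and> t' < 2*pi"
  proof (cases "t < 0")
    case True then have "t' = t + 2*pi" by (simp add: t'_def)
    then show ?thesis using s2 pp True by linarith
  next
    case False then have "t' = t" by (simp add: t'_def)
    then show ?thesis using s2 pp False by linarith
  qed
  ultimately have "s' \<in> {0..<2*pi}" "t' \<in> {0..<2*pi}" by auto
  then have "s' = t'" using inj assms(4) g by (metis inj_onD)
  then show ?thesis using s2 pp unfolding s'_def t'_def by (auto split: if_splits; linarith)
qed

lemma tangent_local:
  assumes cp: "circle_param \<gamma>" and ct: "cont_turning_tangents_at (\<gamma> ` {0..2*pi}) (\<gamma> 0)"
    and k0: "0 < \<kappa>" "\<kappa> < 1"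
  shows "\<exists>e \<phi> c1 c2. 0 < e \<and> e \<le> pi/2 \<and> 0 < c1 \<and> \<kappa> * c2 \<le> c1 \<and> mono_on {-e..e} \<phi> \<and>
     (\<forall>s\<in>{-e..e}. \<forall>t\<in>{-e..e}. c1 * \<bar>\<phi> s - \<phi> t\<bar> \<le> cmod (\<gamma> s - \<gamma> t) \<and> cmod (\<gamma> s - \<gamma> t) \<le> c2 * \<bar>\<phi> s - \<phi> t\<bar>)"
proof -
  define J where "J = \<gamma> ` {0..2*pi}"
  have per: "\<gamma> (x + 2*pi) = \<gamma> x" for x using cp by (simp add: circle_param_def)
  have gcont: "continuous_on UNIV \<gamma>" using cp by (simp add: circle_param_def)
  obtain B \<alpha> \<beta> h h' k where BJ: "B \<subseteq> J" and A0B: "\<gamma> 0 \<in> B" and Bop: "openin (top_of_set J) B"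
    and ab: "\<alpha> < \<beta>" and hom: "homeomorphism {\<alpha><..<\<beta>} B h k"
    and der: "\<And>t. t\<in>{\<alpha><..<\<beta>} \<Longrightarrow> (h has_vector_derivative h' t) (at t) \<and> h' t \<noteq> 0"
    and h'c: "continuous_on {\<alpha><..<\<beta>} h'"
    using ct unfolding cont_turning_tangents_at_def J_def by metis
  have hk: "\<And>y. y \<in> B \<Longrightarrow> h (k y) = y" and kh: "\<And>x. x \<in> {\<alpha><..<\<beta>} \<Longrightarrow> k (h x) = x"
    and kB: "k ` B = {\<alpha><..<\<beta>}" and kc: "continuous_on B k"
    using hom by (auto simp: homeomorphism_def)
  define \<tau>0 where "\<tau>0 = k (\<gamma> 0)"
  have t0: "\<tau>0 \<in> {\<alpha><..<\<beta>}" using kB A0B by (auto simp: \<tau>0_def)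
  define v where "v = h' \<tau>0"
  have v0: "v \<noteq> 0" using der[OF t0] by (simp add: v_def)
  define c where "c = norm v"
  have c0: "c > 0" using v0 by (simp add: c_def)
  define \<eta> where "\<eta> = c * (1 - \<kappa>) / (1 + \<kappa>)"
  have eta0: "\<eta> > 0" using c0 k0 by (simp add: \<eta>_def)
  obtain \<delta> where d0: "\<delta> > 0" and dh: "\<And>t. t \<in> {\<alpha><..<\<beta>} \<Longrightarrow> dist t \<tau>0 < \<delta> \<Longrightarrow> dist (h' t) v < \<eta>"
    using h'c t0 eta0 unfolding continuous_on_iff v_def by metis
  define \<rho> where "\<rho> = min (\<delta>/2) (min ((\<tau>0 - \<alpha>)/2) ((\<beta> - \<tau>0)/2))"
  have rho0: "\<rho> > 0" using d0 t0 by (simp add: \<rho>_def)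
  define I where "I = {\<tau>0 - \<rho>..\<tau>0 + \<rho>}"
  have "\<rho> \<le> (\<tau>0 - \<alpha>)/2" "\<rho> \<le> (\<beta> - \<tau>0)/2" "\<rho> \<le> \<delta>/2" by (auto simp: \<rho>_def min_def)
  then have IS: "I \<subseteq> {\<alpha><..<\<beta>}" using t0 rho0 by (auto simp: I_def)
  have h'I: "norm (h' t - v) \<le> \<eta>" if "t \<in> I" for t
  proof -
    have "dist t \<tau>0 < \<delta>" using that rho0 d0 \<open>\<rho> \<le> \<delta>/2\<close> by (auto simp: I_def dist_real_def)
    then show ?thesis using dh[of t] IS that by (auto simp: dist_norm)
  qed
  have lin: "norm (h t - h s - (t - s) *\<^sub>R v) \<le> \<bar>t - s\<bar> * \<eta>" if "s \<in> I" "t \<in> I" for s t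
  proof -
    have "norm (h t - h s - (\<lambda>u. u *\<^sub>R h' \<tau>0) (t - s)) \<le> norm (t - s) * \<eta>"
    proof (rule differentiable_bound_linearization[where S=I])
      show "s + x *\<^sub>R (t - s) \<in> I" if "x \<in> {0..1}" for x
      proof -
        have "s + x *\<^sub>R (t - s) \<in> closed_segment s t"
          using that by (auto simp: closed_segment_def algebra_simps intro!: exI[of _ x])
        moreover have "closed_segment s t \<subseteq> I"
          using \<open>s \<in> I\<close> \<open>t \<in> I\<close> by (simp add: I_def closed_segment_subset)
        ultimately show ?thesis by blast
      qed
      show "(h has_derivative (\<lambda>u. u *\<^sub>R h' x)) (at x within I)" if "x \<in> I" for x
        using der[of x] IS that has_vector_derivative_at_within unfolding has_vector_derivative_def by blast
      show "onorm ((\<lambda>u. u *\<^sub>R h' x) - (\<lambda>u. u *\<^sub>R h' \<tau>0)) \<le> \<eta>" if "x \<in> I" for x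
      proof -
        have "((\<lambda>u. u *\<^sub>R h' x) - (\<lambda>u. u *\<^sub>R h' \<tau>0)) = (\<lambda>u. u *\<^sub>R (h' x - h' \<tau>0))"
          by (simp add: fun_diff_def algebra_simps)
        moreover have "onorm (\<lambda>u::real. u *\<^sub>R (h' x - h' \<tau>0)) = norm (h' x - h' \<tau>0)"
          using onorm_scaleR_left[OF bounded_linear_ident, of "h' x - h' \<tau>0"] onorm_id[where 'a=real] by simp
        ultimately show ?thesis using h'I[OF that] by (simp add: v_def)
      qed
      show "\<tau>0 \<in> I" using rho0 by (simp add: I_def)
    qed
    then show ?thesis by (simp add: v_def)
  qed
  define c1 where "c1 = c - \<eta>"
  define c2 where "c2 = c + \<eta>"
  have c1pos: "c1 > 0" using c0 k0 by (simp add: c1_def \<eta>_def field_simps)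
  have kc2: "\<kappa> * c2 \<le> c1"
  proof -
    have "\<kappa> * c2 = c1" using k0 by (simp add: c1_def c2_def \<eta>_def field_simps)
    then show ?thesis by simp
  qed
  have hbounds: "c1 * \<bar>t - s\<bar> \<le> norm (h t - h s) \<and> norm (h t - h s) \<le> c2 * \<bar>t - s\<bar>" if "s \<in> I" "t \<in> I" for s t
  proof -
    have nv: "norm ((t - s) *\<^sub>R v) = \<bar>t - s\<bar> * c" by (simp add: c_def)
    have "norm ((t - s) *\<^sub>R v) - norm (h t - h s) \<le> norm (h t - h s - (t - s) *\<^sub>R v)"
      by (metis norm_minus_commute norm_triangle_ineq2)
    moreover have "norm (h t - h s) - norm ((t - s) *\<^sub>R v) \<le> norm (h t - h s - (t - s) *\<^sub>R v)"
      by (rule norm_triangle_ineq2)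
    ultimately show ?thesis using lin[OF that] nv by (auto simp: c1_def c2_def algebra_simps)
  qed
  obtain U1 where U1: "open U1" "B = J \<inter> U1" using Bop by (auto simp: openin_open)
  have "openin (top_of_set B) (B \<inter> k -` {\<tau>0 - \<rho><..<\<tau>0 + \<rho>})"
    by (rule continuous_openin_preimage_gen[OF kc]) simp
  then obtain U2 where U2: "open U2" "B \<inter> k -` {\<tau>0 - \<rho><..<\<tau>0 + \<rho>} = B \<inter> U2"
    by (auto simp: openin_open)
  define U where "U = U1 \<inter> U2"
  have A0U: "\<gamma> 0 \<in> U"
  proof -
    have "\<gamma> 0 \<in> B \<inter> k -` {\<tau>0 - \<rho><..<\<tau>0 + \<rho>}" using A0B rho0 by (simp add: \<tau>0_def)
    then show ?thesis using U1 U2 by (auto simp: U_def)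
  qed
  have "open (\<gamma> -` U)" using gcont U1 U2 by (simp add: U_def open_vimage open_Int)
  then obtain e0 where e0: "e0 > 0" "ball 0 e0 \<subseteq> \<gamma> -` U"
    using A0U by (meson open_contains_ball vimageI2)
  define e where "e = min (e0/2) (pi/2)"
  have e0': "e > 0" "e \<le> pi/2" using e0 by (auto simp: e_def)
  have inJ: "\<gamma> s \<in> J" if "s \<in> {-e..e}" for s
  proof (cases "s < 0")
    case True
    then have "s + 2*pi \<in> {0..2*pi}" using that e0' by auto
    then show ?thesis unfolding J_def by (metis per image_eqI)
  next
    case False
    then have "s \<in> {0..2*pi}" using that e0' by auto
    then show ?thesis unfolding J_def by blast
  qed
  have inU: "\<gamma> s \<in> U" if "s \<in> {-e..e}" for s
  proof -
    have "s \<in> ball 0 e0" using that e0 by (auto simp: e_def)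
    then show ?thesis using e0 by auto
  qed
  have inB: "\<gamma> s \<in> B" and inK: "k (\<gamma> s) \<in> I" if "s \<in> {-e..e}" for s
  proof -
    show "\<gamma> s \<in> B" using inJ[OF that] inU[OF that] U1 by (auto simp: U_def)
    then have "\<gamma> s \<in> B \<inter> U2" using inU[OF that] by (auto simp: U_def)
    then have "\<gamma> s \<in> B \<inter> k -` {\<tau>0 - \<rho><..<\<tau>0 + \<rho>}" using U2(2) by simp
    then show "k (\<gamma> s) \<in> I" by (auto simp: I_def)
  qed
  define \<phi>0 where "\<phi>0 s = k (\<gamma> s)" for s
  have \<phi>0c: "continuous_on {-e..e} \<phi>0"
    unfolding \<phi>0_def
    by (rule continuous_on_compose2[OF kc continuous_on_subset[OF gcont]]) (use inB in auto)
  have \<phi>0i: "inj_on \<phi>0 {-e..e}"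
  proof (rule inj_onI)
    fix s t assume st: "s \<in> {-e..e}" "t \<in> {-e..e}" "\<phi>0 s = \<phi>0 t"
    then have "\<gamma> s = \<gamma> t" using hk[OF inB[OF st(1)]] hk[OF inB[OF st(2)]] by (metis \<phi>0_def)
    then show "s = t" using local_inj[OF cp] st e0' by auto
  qed
  have \<phi>0b: "c1 * \<bar>\<phi>0 s - \<phi>0 t\<bar> \<le> cmod (\<gamma> s - \<gamma> t) \<and> cmod (\<gamma> s - \<gamma> t) \<le> c2 * \<bar>\<phi>0 s - \<phi>0 t\<bar>"
    if "s \<in> {-e..e}" "t \<in> {-e..e}" for s t
  proof -
    have "\<gamma> s = h (\<phi>0 s)" "\<gamma> t = h (\<phi>0 t)" using hk inB that by (auto simp: \<phi>0_def)
    then show ?thesis using hbounds[OF inK[OF that(2)] inK[OF that(1)]] by (simp add: \<phi>0_def)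
  qed
  have "strict_mono_on {-e..e} \<phi>0 \<or> strict_antimono_on {-e..e} \<phi>0"
    using injective_eq_monotone_map[of "{-e..e}" \<phi>0] \<phi>0c \<phi>0i by (simp add: is_interval_cc)
  then obtain \<phi> where mono: "mono_on {-e..e} \<phi>" and phieq: "\<And>s t. \<bar>\<phi> s - \<phi> t\<bar> = \<bar>\<phi>0 s - \<phi>0 t\<bar>"
  proof
    assume "strict_mono_on {-e..e} \<phi>0"
    then show ?thesis by (intro that[of \<phi>0] strict_mono_on_imp_mono_on) auto
  next
    assume sa: "strict_antimono_on {-e..e} \<phi>0"
    have "mono_on {-e..e} (\<lambda>s. - \<phi>0 s)"
    proof (rule mono_onI)
      fix r s assume rs: "r \<in> {-e..e}" "s \<in> {-e..e}" "r \<le> s"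
      have "r < s \<Longrightarrow> \<phi>0 s < \<phi>0 r" using sa rs(1,2) unfolding monotone_on_def by blast
      then show "- \<phi>0 r \<le> - \<phi>0 s" using rs(3) by (cases "r = s") auto
    qed
    then show ?thesis by (intro that[of "\<lambda>s. - \<phi>0 s"]) (simp_all add: abs_minus_commute)
  qed
  show ?thesis
    apply (rule exI[of _ e], rule exI[of _ \<phi>], rule exI[of _ c1], rule exI[of _ c2])
    using e0' c1pos kc2 mono \<phi>0b phieq by auto
qed




lemma chain_mono_le:
  fixes \<sigma> :: "nat \<Rightarrow> real"
  assumes "\<And>i. i < n \<Longrightarrow> \<sigma> i \<le> \<sigma> (Suc i)" "i \<le> i'" "i' \<le> n"
  shows "\<sigma> i \<le> \<sigma> i'"
  using assms(2,3)
proof (induction i')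
  case 0 then show ?case by simp
next
  case (Suc i')
  show ?case
  proof (cases "i = Suc i'")
    case False
    then have "\<sigma> i \<le> \<sigma> i'" using Suc by simp
    also have "\<dots> \<le> \<sigma> (Suc i')" using assms(1) Suc.prems by simp
    finally show ?thesis .
  qed simp
qed

lemma chain_flat:
  fixes \<gamma> :: "real \<Rightarrow> complex" and \<phi> :: "real \<Rightarrow> real" and \<sigma> :: "nat \<Rightarrow> real"
  assumes per: "\<And>x. \<gamma> (x + 2*pi) = \<gamma> x"
    and mono: "mono_on {-e..e} \<phi>"
    and bnd: "\<And>s t. s \<in> {-e..e} \<Longrightarrow> t \<in> {-e..e} \<Longrightarrow> c1 * \<bar>\<phi> s - \<phi> t\<bar> \<le> cmod (\<gamma> s - \<gamma> t) \<and> cmod (\<gamma> s - \<gamma> t) \<le> c2 * \<bar>\<phi> s - \<phi> t\<bar>"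
    and kc: "\<kappa> * c2 \<le> c1" and k0: "0 \<le> \<kappa>"
    and s0: "\<sigma> 0 = 0" and sn: "\<sigma> n = 2*pi" and smono: "\<And>i. i < n \<Longrightarrow> \<sigma> i \<le> \<sigma> (Suc i)"
    and j: "1 \<le> j" "j \<le> n" and big: "2*pi - e \<le> \<sigma> j - \<sigma> (j-1)"
  shows "\<kappa> * (\<Sum>i\<in>{1..n}-{j}. cmod (\<gamma> (\<sigma> i) - \<gamma> (\<sigma> (i-1)))) \<le> cmod (\<gamma> (\<sigma> j) - \<gamma> (\<sigma> (j-1)))"
proof -
  have sm: "\<sigma> i \<le> \<sigma> i'" if "i \<le> i'" "i' \<le> n" for i i'
    using chain_mono_le[of n \<sigma>, OF smono that] .
  have jj: "Suc (j - 1) = j" using j by simp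
  have s_nonneg: "0 \<le> \<sigma> i" if "i \<le> n" for i using sm[of 0 i] that s0 by simp
  have s_le: "\<sigma> i \<le> 2*pi" if "i \<le> n" for i using sm[of i n] that sn by simp
  have sj1: "0 \<le> \<sigma> (j-1)" "\<sigma> j \<le> 2*pi" using s_nonneg[of "j-1"] s_le[of j] j by auto
  then have e0: "0 \<le> e" using big by linarith
  define s where "s i = (if i < j then \<sigma> i else \<sigma> i - 2*pi)" for i
  have sin: "s i \<in> {-e..e}" if "i \<le> n" for i
  proof (cases "i < j")
    case True
    then have "\<sigma> i \<le> \<sigma> (j-1)" using sm[of i "j-1"] j by simp
    then show ?thesis using True s_nonneg[of i] that big s_le[of j] j e0 by (simp add: s_def)
  next
    case False
    then have "\<sigma> j \<le> \<sigma> i" using sm[of j i] that by simp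
    then show ?thesis using False sj1 that big s_le[of i] j e0 by (simp add: s_def)
  qed
  have gs: "\<gamma> (s i) = \<gamma> (\<sigma> i)" for i
    using per[of "\<sigma> i - 2*pi"] by (simp add: s_def)
  define \<tau> where "\<tau> i = \<phi> (s i)" for i
  define d where "d i = cmod (\<gamma> (\<sigma> i) - \<gamma> (\<sigma> (i-1)))" for i
  define E where "E i = \<bar>\<tau> i - \<tau> (i-1)\<bar>" for i
  have dle: "d i \<le> c2 * E i" and dge: "c1 * E i \<le> d i" if "1 \<le> i" "i \<le> n" for i
    using bnd[OF sin[of i] sin[of "i-1"]] that gs[of i] gs[of "i-1"] by (auto simp: d_def E_def \<tau>_def)
  have tmono1: "\<tau> (i-1) \<le> \<tau> i" if "1 \<le> i" "i < j" for i
  proof -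
    have "s (i-1) = \<sigma> (i-1)" "s i = \<sigma> i" using that by (auto simp: s_def)
    then have "s (i-1) \<le> s i" using sm[of "i-1" i] that j by simp
    then show ?thesis using mono sin[of i] sin[of "i-1"] that j unfolding \<tau>_def
      by (meson mono_onD le_trans less_imp_le_nat diff_le_self)
  qed
  have tmono2: "\<tau> (i-1) \<le> \<tau> i" if "j < i" "i \<le> n" for i
  proof -
    have "s (i-1) = \<sigma> (i-1) - 2*pi" "s i = \<sigma> i - 2*pi" using that by (auto simp: s_def)
    then have "s (i-1) \<le> s i" using sm[of "i-1" i] that j by simp
    then show ?thesis using mono sin[of i] sin[of "i-1"] that j unfolding \<tau>_def
      by (meson mono_onD le_trans less_imp_le_nat diff_le_self)
  qed
  have sum1: "(\<Sum>i\<in>{1..k}. E i) = \<tau> k - \<tau> 0" if "k < j" for k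
    using that
  proof (induction k)
    case 0 then show ?case by simp
  next
    case (Suc k)
    then have "(\<Sum>i\<in>{1..Suc k}. E i) = \<tau> k - \<tau> 0 + E (Suc k)" by (simp add: sum.cl_ivl_Suc)
    also have "E (Suc k) = \<tau> (Suc k) - \<tau> k" using tmono1[of "Suc k"] Suc.prems by (simp add: E_def)
    finally show ?case by simp
  qed
  have sum2: "(\<Sum>i\<in>{Suc j..k}. E i) = \<tau> k - \<tau> j" if "j \<le> k" "k \<le> n" for k
    using that
  proof (induction k rule: dec_induct)
    case base then show ?case by simp
  next
    case (step k)
    have "(\<Sum>i\<in>{Suc j..Suc k}. E i) = (\<Sum>i\<in>{Suc j..k}. E i) + E (Suc k)"
      using step.hyps(1) by (simp add: sum.cl_ivl_Suc)
    also have "\<dots> = \<tau> k - \<tau> j + E (Suc k)" using step by simp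
    also have "E (Suc k) = \<tau> (Suc k) - \<tau> k" using tmono2[of "Suc k"] step by (simp add: E_def)
    finally show ?case by simp
  qed
  have t0: "\<tau> 0 = \<phi> 0" using j s0 by (simp add: \<tau>_def s_def)
  have tn: "\<tau> n = \<phi> 0" using j sn by (simp add: \<tau>_def s_def)
  have zin: "0 \<in> {-e..e}" using e0 by simp
  have tj1: "\<phi> 0 \<le> \<tau> (j-1)"
  proof -
    have "0 \<le> s (j-1)" using s_nonneg[of "j-1"] j by (simp add: s_def)
    then show ?thesis using mono_onD[OF mono zin sin[of "j-1"]] j by (simp add: \<tau>_def)
  qed
  have tj: "\<tau> j \<le> \<phi> 0"
  proof -
    have "s j \<le> 0" using s_le[of j] j by (simp add: s_def)
    then show ?thesis using mono_onD[OF mono sin[of j] zin] j by (simp add: \<tau>_def)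
  qed
  have split: "{1..n} - {j} = {1..j-1} \<union> {Suc j..n}" using j by auto
  have disj: "{1..j-1} \<inter> {Suc j..n} = {}" by auto
  have Esum: "(\<Sum>i\<in>{1..n}-{j}. E i) = E j"
  proof -
    have "(\<Sum>i\<in>{1..n}-{j}. E i) = (\<Sum>i\<in>{1..j-1}. E i) + (\<Sum>i\<in>{Suc j..n}. E i)"
      unfolding split by (rule sum.union_disjoint) (auto)
    also have "\<dots> = (\<tau> (j-1) - \<tau> 0) + (\<tau> n - \<tau> j)" using sum1[of "j-1"] sum2[of n] j by simp
    also have "\<dots> = E j" using t0 tn tj1 tj by (simp add: E_def)
    finally show ?thesis .
  qed
  have "(\<Sum>i\<in>{1..n}-{j}. d i) \<le> (\<Sum>i\<in>{1..n}-{j}. c2 * E i)"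
    by (rule sum_mono) (use dle in auto)
  also have "\<dots> = c2 * E j" using Esum by (simp add: sum_distrib_left[symmetric])
  finally have "\<kappa> * (\<Sum>i\<in>{1..n}-{j}. d i) \<le> \<kappa> * (c2 * E j)" using k0 by (simp add: mult_left_mono)
  also have "\<dots> \<le> c1 * E j" using kc by (simp add: mult.assoc[symmetric] mult_right_mono E_def)
  also have "\<dots> \<le> d j" using dge j by simp
  finally show ?thesis by (simp add: d_def)
qed




locale cfg =
  fixes \<gamma> :: "real \<Rightarrow> complex" and a :: "nat \<Rightarrow> real" and n :: nat and \<epsilon> \<kappa> :: real
  assumes gcont: "continuous_on UNIV \<gamma>" and per: "\<And>t. \<gamma> (t + 2*pi) = \<gamma> t"
    and ginj: "inj_on \<gamma> {0..<2*pi}"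
    and n3: "3 \<le> n" and apos: "\<And>i. i \<in> {1..n} \<Longrightarrow> 0 < a i"
    and eps: "0 < \<epsilon>" "\<epsilon> \<le> pi/2"
    and k0: "0 \<le> \<kappa>" and kq: "\<And>j. j \<in> {1..n} \<Longrightarrow> a j / (\<Sum>i\<in>{1..n}. a i) < \<kappa> / (1 + \<kappa>)"
    and flat: "\<And>\<sigma> j. \<sigma> 0 = 0 \<Longrightarrow> \<sigma> n = 2*pi \<Longrightarrow> (\<And>i. i < n \<Longrightarrow> \<sigma> i \<le> \<sigma> (Suc i)) \<Longrightarrow>
       1 \<le> j \<Longrightarrow> j \<le> n \<Longrightarrow> 2*pi - \<epsilon> \<le> \<sigma> j - \<sigma> (j-1) \<Longrightarrow>
       \<kappa> * (\<Sum>i\<in>{1..n}-{j}. cmod (\<gamma> (\<sigma> i) - \<gamma> (\<sigma> (i-1)))) \<le> cmod (\<gamma> (\<sigma> j) - \<gamma> (\<sigma> (j-1)))"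
begin

definition "M = 2*pi - \<epsilon>"
definition "S = (\<Sum>i\<in>{1..n}. a i)"
definition "q i = a i / S"
definition "\<mu> = 1 / (real n * M + 1)"
definition "sig u k = (if n \<le> k then 2*pi else (\<Sum>i\<in>{1..k}. u i))"
definition "uu u i = sig u i - sig u (i-1)"
definition "side u i = cmod (\<gamma> (sig u i) - \<gamma> (sig u (i-1)))"
definition "D u = (\<Sum>i\<in>{1..n}. side u i)"
definition "w u i = q i - side u i / D u"
definition "Nn u = (\<Sum>i\<in>{1..n}. max 0 (- w u i) * uu u i)"
definition "Pp u = (\<Sum>i\<in>{1..n}. max 0 (w u i) * (M - uu u i))"
definition "hh u i = \<mu> * (Nn u * max 0 (w u i) * (M - uu u i) - Pp u * max 0 (- w u i) * uu u i)"
definition "Gm u i = u i + hh u i"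
definition "Dom = {u. (\<forall>i\<in>{1..n-1}. 0 \<le> u i \<and> u i \<le> M) \<and> \<epsilon> \<le> (\<Sum>i\<in>{1..n-1}. u i) \<and> (\<Sum>i\<in>{1..n-1}. u i) \<le> 2*pi}"

lemma M_pos: "0 < M" "M < 2*pi" using eps pi_gt_zero unfolding M_def by linarith+

lemma S_pos: "0 < S" unfolding S_def
  by (rule sum_pos) (use apos n3 in auto)

lemma q_pos: "i \<in> {1..n} \<Longrightarrow> 0 < q i" unfolding q_def using apos S_pos by simp

lemma q_sum: "(\<Sum>i\<in>{1..n}. q i) = 1"
  unfolding q_def using S_pos by (simp add: sum_divide_distrib[symmetric] S_def)

lemma q_le1: "i \<in> {1..n} \<Longrightarrow> q i \<le> 1"
proof -
  assume i: "i \<in> {1..n}"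
  have "q i \<le> (\<Sum>i\<in>{1..n}. q i)" using i by (intro member_le_sum) (auto intro!: less_imp_le[OF q_pos])
  then show ?thesis using q_sum by simp
qed

lemma sig0: "sig u 0 = 0" using n3 by (simp add: sig_def)
lemma sign: "sig u n = 2*pi" by (simp add: sig_def)

lemma uu_lt: "i \<in> {1..n-1} \<Longrightarrow> uu u i = u i"
proof -
  assume i: "i \<in> {1..n-1}"
  then have "\<not> n \<le> i" "\<not> n \<le> i - 1" "{1..i} = insert i {1..i-1}" "i \<notin> {1..i-1}" using n3 by auto
  then show ?thesis by (simp add: uu_def sig_def)
qed

lemma uu_n: "uu u n = 2*pi - (\<Sum>i\<in>{1..n-1}. u i)"
  using n3 by (simp add: uu_def sig_def)

lemma uu_Dom: "u \<in> Dom \<Longrightarrow> i \<in> {1..n} \<Longrightarrow> 0 \<le> uu u i \<and> uu u i \<le> M"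
proof -
  assume u: "u \<in> Dom" and i: "i \<in> {1..n}"
  show ?thesis
  proof (cases "i = n")
    case True
    then show ?thesis using u by (simp add: uu_n Dom_def M_def)
  next
    case False
    then have "i \<in> {1..n-1}" using i by auto
    then show ?thesis using u uu_lt by (simp add: Dom_def)
  qed
qed

lemma sig_step: "sig u (Suc i) = sig u i + uu u (Suc i)" by (simp add: uu_def)

lemma sig_mono: "u \<in> Dom \<Longrightarrow> i < n \<Longrightarrow> sig u i \<le> sig u (Suc i)"
  using uu_Dom[of u "Suc i"] sig_step[of u i] by simp

lemma sig_range: "u \<in> Dom \<Longrightarrow> k \<le> n \<Longrightarrow> 0 \<le> sig u k \<and> sig u k \<le> 2*pi"
proof -
  assume u: "u \<in> Dom" and k: "k \<le> n"
  have "sig u 0 \<le> sig u k" "sig u k \<le> sig u n"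
    using chain_mono_le[of n "sig u"] k sig_mono[OF u] by auto
  then show ?thesis by (simp add: sig0 sign)
qed

lemma side_nonneg: "0 \<le> side u i" by (simp add: side_def)

lemma D_nonneg: "0 \<le> D u" unfolding D_def by (rule sum_nonneg) (simp add: side_nonneg)

lemma D_pos: "u \<in> Dom \<Longrightarrow> 0 < D u"
proof (rule ccontr)
  assume u: "u \<in> Dom" and "\<not> 0 < D u"
  then have "D u = 0" using D_nonneg[of u] by simp
  then have s0: "\<forall>i\<in>{1..n}. side u i = 0"
    unfolding D_def by (subst (asm) sum_nonneg_eq_0_iff) (auto simp: side_nonneg)
  have z: "sig u k = 0" if "k \<le> n - 1" for k
    using that
  proof (induction k)
    case 0 then show ?case by (simp add: sig0)
  next
    case (Suc k)
    have kn: "Suc k \<in> {1..n}" using Suc.prems by auto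
    have "\<gamma> (sig u (Suc k)) = \<gamma> (sig u k)" using s0 kn by (simp add: side_def)
    also have "\<dots> = \<gamma> 0" using Suc by simp
    finally have g: "\<gamma> (sig u (Suc k)) = \<gamma> 0" .
    have "sig u (Suc k) = uu u (Suc k)" using sig_step[of u k] Suc by simp
    then have "0 \<le> sig u (Suc k)" "sig u (Suc k) < 2*pi" using uu_Dom[OF u kn] M_pos by auto
    then show ?case using g ginj by (auto dest: inj_onD)
  qed
  have "sig u (n-1) = (\<Sum>i\<in>{1..n-1}. u i)" using n3 by (simp add: sig_def)
  then show False using z[of "n-1"] u eps by (simp add: Dom_def)
qed

lemma frac_bounds: "u \<in> Dom \<Longrightarrow> i \<in> {1..n} \<Longrightarrow> 0 \<le> side u i / D u \<and> side u i / D u \<le> 1"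
proof -
  assume u: "u \<in> Dom" and i: "i \<in> {1..n}"
  have "side u i \<le> D u" unfolding D_def using i by (intro member_le_sum) (auto simp: side_nonneg)
  then show ?thesis using D_pos[OF u] by (simp add: side_nonneg)
qed

lemma w_bound: "u \<in> Dom \<Longrightarrow> i \<in> {1..n} \<Longrightarrow> \<bar>w u i\<bar> \<le> 1"
  using frac_bounds[of u i] q_pos[of i] q_le1[of i] by (auto simp: w_def abs_le_iff)

lemma w_sum: "u \<in> Dom \<Longrightarrow> (\<Sum>i\<in>{1..n}. w u i) = 0"
proof -
  assume u: "u \<in> Dom"
  have "(\<Sum>i\<in>{1..n}. side u i / D u) = 1"
    using D_pos[OF u] by (simp add: sum_divide_distrib[symmetric] D_def)
  then show ?thesis using q_sum by (simp add: w_def sum_subtractf)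
qed

lemma w_zero_side: "u \<in> Dom \<Longrightarrow> i \<in> {1..n} \<Longrightarrow> uu u i = 0 \<Longrightarrow> 0 < w u i"
proof -
  assume u: "u \<in> Dom" and i: "i \<in> {1..n}" and z: "uu u i = 0"
  then have "sig u i = sig u (i-1)" by (simp add: uu_def)
  then have "side u i = 0" by (simp add: side_def)
  then show ?thesis using q_pos[OF i] by (simp add: w_def)
qed

lemma w_full_side: "u \<in> Dom \<Longrightarrow> j \<in> {1..n} \<Longrightarrow> uu u j = M \<Longrightarrow> w u j < 0"
proof -
  assume u: "u \<in> Dom" and j: "j \<in> {1..n}" and f: "uu u j = M"
  define R where "R = (\<Sum>i\<in>{1..n}-{j}. side u i)"
  have fl: "\<kappa> * R \<le> side u j"
    unfolding R_def side_def
    by (rule flat[of "sig u" j]) (use sig0 sign sig_mono[OF u] j f in \<open>auto simp: uu_def M_def\<close>)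
  have DR: "D u = side u j + R"
    unfolding D_def R_def using j by (simp add: sum.remove)
  have Dp: "0 < D u" by (rule D_pos[OF u])
  have "\<kappa> * D u \<le> (1 + \<kappa>) * side u j" using fl DR by (simp add: algebra_simps)
  then have "\<kappa> / (1 + \<kappa>) \<le> side u j / D u" using Dp k0
    by (simp add: divide_le_eq le_divide_eq mult.commute)
  then have "q j < side u j / D u" using kq[OF j] by (simp add: q_def S_def)
  then show ?thesis by (simp add: w_def)
qed

lemma Nn_bounds: "u \<in> Dom \<Longrightarrow> 0 \<le> Nn u \<and> Nn u \<le> real n * M"
proof -
  assume u: "u \<in> Dom"
  have t: "0 \<le> max 0 (- w u i) * uu u i \<and> max 0 (- w u i) * uu u i \<le> M" if "i \<in> {1..n}" for i
  proof -
    have m1: "max 0 (- w u i) \<le> 1" using w_bound[OF u that] by (simp add: abs_le_iff)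
    have ub: "0 \<le> uu u i" "uu u i \<le> M" using uu_Dom[OF u that] by auto
    have "max 0 (- w u i) * uu u i \<le> 1 * M" by (rule mult_mono) (use m1 ub in auto)
    then show ?thesis using ub by simp
  qed
  have "Nn u \<le> (\<Sum>i\<in>{1..n}. M)" unfolding Nn_def by (rule sum_mono) (use t in auto)
  moreover have "0 \<le> Nn u" unfolding Nn_def by (rule sum_nonneg) (use t in auto)
  ultimately show ?thesis by simp
qed

lemma Pp_bounds: "u \<in> Dom \<Longrightarrow> 0 \<le> Pp u \<and> Pp u \<le> real n * M"
proof -
  assume u: "u \<in> Dom"
  have t: "0 \<le> max 0 (w u i) * (M - uu u i) \<and> max 0 (w u i) * (M - uu u i) \<le> M" if "i \<in> {1..n}" for i
  proof -
    have m1: "max 0 (w u i) \<le> 1" using w_bound[OF u that] by (simp add: abs_le_iff)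
    have ub: "0 \<le> M - uu u i" "M - uu u i \<le> M" using uu_Dom[OF u that] by auto
    have "max 0 (w u i) * (M - uu u i) \<le> 1 * M" by (rule mult_mono) (use m1 ub in auto)
    then show ?thesis using ub by simp
  qed
  have "Pp u \<le> (\<Sum>i\<in>{1..n}. M)" unfolding Pp_def by (rule sum_mono) (use t in auto)
  moreover have "0 \<le> Pp u" unfolding Pp_def by (rule sum_nonneg) (use t in auto)
  ultimately show ?thesis by simp
qed

lemma nM_nonneg: "0 \<le> real n * M" using M_pos by simp

lemma mu_pos: "0 < \<mu>" using nM_nonneg by (simp add: \<mu>_def)

lemma mu_bound: "\<mu> * (real n * M) \<le> 1"
  using nM_nonneg by (simp add: \<mu>_def divide_le_eq_1)

lemma hh_sum: "(\<Sum>i\<in>{1..n}. hh u i) = 0"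
proof -
  have "(\<Sum>i\<in>{1..n}. hh u i) = \<mu> * (Nn u * (\<Sum>i\<in>{1..n}. max 0 (w u i) * (M - uu u i)) - Pp u * (\<Sum>i\<in>{1..n}. max 0 (- w u i) * uu u i))"
    by (simp add: hh_def sum_distrib_left sum_subtractf mult.assoc right_diff_distrib)
  also have "\<dots> = \<mu> * (Nn u * Pp u - Pp u * Nn u)" by (simp only: Nn_def Pp_def)
  also have "\<dots> = 0" by simp
  finally show ?thesis .
qed

lemma hh_bounds: "u \<in> Dom \<Longrightarrow> i \<in> {1..n} \<Longrightarrow> - uu u i \<le> hh u i \<and> hh u i \<le> M - uu u i"
proof -
  assume u: "u \<in> Dom" and i: "i \<in> {1..n}"
  have wb: "\<bar>w u i\<bar> \<le> 1" by (rule w_bound[OF u i])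
  have ub: "0 \<le> uu u i" "uu u i \<le> M" using uu_Dom[OF u i] by auto
  show ?thesis
  proof (cases "0 \<le> w u i")
    case True
    then have hh: "hh u i = (\<mu> * Nn u * w u i) * (M - uu u i)" by (simp add: hh_def)
    have "\<mu> * Nn u \<le> 1" using mu_bound Nn_bounds[OF u] mu_pos
      by (meson mult_left_mono order_trans less_imp_le)
    have c0: "0 \<le> \<mu> * Nn u * w u i" using True mu_pos Nn_bounds[OF u] by simp
    have "\<mu> * Nn u * w u i \<le> 1" by (rule mult_le_one) (use \<open>\<mu> * Nn u \<le> 1\<close> True wb mu_pos Nn_bounds[OF u] in auto)
    note c = c0 this
    have "(\<mu> * Nn u * w u i) * (M - uu u i) \<le> 1 * (M - uu u i)"
      by (rule mult_right_mono) (use c ub in auto)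
    moreover have "0 \<le> (\<mu> * Nn u * w u i) * (M - uu u i)" using c ub by simp
    ultimately show ?thesis using hh ub by simp
  next
    case False
    then have hh: "hh u i = - ((\<mu> * Pp u * (- w u i)) * uu u i)" by (simp add: hh_def)
    have "\<mu> * Pp u \<le> 1" using mu_bound Pp_bounds[OF u] mu_pos
      by (meson mult_left_mono order_trans less_imp_le)
    have c0: "0 \<le> \<mu> * Pp u * (- w u i)" using False mu_pos Pp_bounds[OF u] by (intro mult_nonneg_nonneg) auto
    have "\<mu> * Pp u * (- w u i) \<le> 1" by (rule mult_le_one) (use \<open>\<mu> * Pp u \<le> 1\<close> False wb mu_pos Pp_bounds[OF u] in auto)
    note c = c0 this
    have "(\<mu> * Pp u * (- w u i)) * uu u i \<le> 1 * uu u i"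
      by (rule mult_right_mono) (use c ub in auto)
    moreover have "0 \<le> (\<mu> * Pp u * (- w u i)) * uu u i" by (rule mult_nonneg_nonneg) (use c ub in auto)
    ultimately show ?thesis using hh ub by simp
  qed
qed

lemma sum_split_n: "(\<Sum>i\<in>{1..n}. f i) = (\<Sum>i\<in>{1..n-1}. f i) + f n"
proof -
  have "{1..n} = insert n {1..n-1}" "n \<notin> {1..n-1}" using n3 by auto
  then show ?thesis by (simp add: add.commute)
qed

lemma Gm_Dom: "u \<in> Dom \<Longrightarrow> Gm u \<in> Dom"
proof -
  assume u: "u \<in> Dom"
  have c: "0 \<le> Gm u i \<and> Gm u i \<le> M" if "i \<in> {1..n-1}" for i
  proof -
    have i: "i \<in> {1..n}" using that by auto
    show ?thesis using hh_bounds[OF u i] uu_lt[OF that] by (simp add: Gm_def)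
  qed
  have "(\<Sum>i\<in>{1..n-1}. hh u i) = - hh u n" using hh_sum[of u] sum_split_n[of "hh u"] by simp
  then have sG: "(\<Sum>i\<in>{1..n-1}. Gm u i) = (\<Sum>i\<in>{1..n-1}. u i) - hh u n"
    by (simp add: Gm_def sum.distrib)
  have nn: "n \<in> {1..n}" using n3 by simp
  have "0 \<le> uu u n + hh u n" "uu u n + hh u n \<le> M" using hh_bounds[OF u nn] by auto
  then show ?thesis using c sG by (simp add: Dom_def uu_n M_def)
qed

lemma fixed_w: "u \<in> Dom \<Longrightarrow> (\<forall>i\<in>{1..n-1}. hh u i = 0) \<Longrightarrow> \<forall>i\<in>{1..n}. w u i = 0"
proof (rule ccontr)
  assume u: "u \<in> Dom" and h0: "\<forall>i\<in>{1..n-1}. hh u i = 0" and "\<not> (\<forall>i\<in>{1..n}. w u i = 0)"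
  then obtain i0 where i0: "i0 \<in> {1..n}" "w u i0 \<noteq> 0" by blast
  have hn: "hh u n = 0" using hh_sum[of u] sum_split_n[of "hh u"] h0 by simp
  have hall: "\<forall>i\<in>{1..n}. hh u i = 0"
  proof
    fix i assume "i \<in> {1..n}"
    then show "hh u i = 0" using h0 hn by (cases "i = n") auto
  qed
  have ex_pos: "\<exists>k\<in>{1..n}. 0 < w u k"
  proof (rule ccontr)
    assume "\<not> ?thesis"
    then have "\<forall>k\<in>{1..n}. - w u k \<ge> 0" by auto
    moreover have "(\<Sum>k\<in>{1..n}. - w u k) = 0" using w_sum[OF u] by (simp add: sum_negf)
    ultimately have "\<forall>k\<in>{1..n}. - w u k = 0" by (subst (asm) sum_nonneg_eq_0_iff) auto
    then show False using i0 by auto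
  qed
  have ex_neg: "\<exists>k\<in>{1..n}. w u k < 0"
  proof (rule ccontr)
    assume "\<not> ?thesis"
    then have "\<forall>k\<in>{1..n}. w u k \<ge> 0" by auto
    moreover have "(\<Sum>k\<in>{1..n}. w u k) = 0" using w_sum[OF u] by simp
    ultimately have "\<forall>k\<in>{1..n}. w u k = 0" by (subst (asm) sum_nonneg_eq_0_iff) auto
    then show False using i0 by auto
  qed
  obtain k where k: "k \<in> {1..n}" "0 < w u k" using ex_pos by blast
  obtain l where l: "l \<in> {1..n}" "w u l < 0" using ex_neg by blast
  show False
  proof (cases "Nn u = 0")
    case True
    have z: "\<forall>i\<in>{1..n}. max 0 (- w u i) * uu u i = 0"
      using True unfolding Nn_def
      by (subst (asm) sum_nonneg_eq_0_iff) (auto intro!: mult_nonneg_nonneg simp: uu_Dom[OF u])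
    have "max 0 (- w u l) * uu u l = 0" using z l(1) by blast
    moreover have "max 0 (- w u l) \<noteq> 0" using l(2) by simp
    ultimately have "uu u l = 0" using l(2) by auto
    then show False using w_zero_side[OF u l(1)] l by simp
  next
    case False
    then have Npos: "0 < Nn u" using Nn_bounds[OF u] by simp
    have "hh u k = \<mu> * Nn u * w u k * (M - uu u k)" using k by (simp add: hh_def)
    then have "\<mu> * Nn u * w u k * (M - uu u k) = 0" using hall k by simp
    then have "uu u k = M" using mu_pos Npos k by simp
    then show False using w_full_side[OF u k(1)] k by simp
  qed
qed

end



lemma cont_coord [continuous_intros]: "continuous_on S (\<lambda>x::nat\<Rightarrow>real. x i)"
  by (rule continuous_on_subset[OF continuous_on_product_coordinates]) simp

context cfg begin

definition "ret v i = v i * (2*pi) / max (2*pi) (\<Sum>j\<in>{1..n-1}. v j) + max 0 (\<epsilon> - (\<Sum>j\<in>{1..n-1}. v j)) / real (n-1)"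

lemma ret_Dom:
  assumes v: "\<forall>i\<in>{1..n-1}. 0 \<le> v i \<and> v i \<le> M"
  shows "ret v \<in> Dom"
proof -
  define T where "T = (\<Sum>j\<in>{1..n-1}. v j)"
  have T0: "0 \<le> T" unfolding T_def by (rule sum_nonneg) (use v in auto)
  have vT: "v i \<le> T" if "i \<in> {1..n-1}" for i
    unfolding T_def by (rule member_le_sum) (use v that in auto)
  define c where "c = 2*pi / max (2*pi) T"
  define t where "t = max 0 (\<epsilon> - T) / real (n-1)"
  have n1: "0 < real (n-1)" using n3 by simp
  have rv: "ret v i = c * v i + t" for i unfolding ret_def c_def t_def T_def by simp
  have mx: "0 < max (2*pi) T" by (rule less_le_trans[OF _ max.cobounded1]) simp
  have c0: "0 < c" "c \<le> 1" using mx by (auto simp: c_def divide_le_eq_1)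
  have t0: "0 \<le> t" using n1 by (simp add: t_def)
  have Mb: "\<epsilon> \<le> M" using eps pi_gt_zero by (simp add: M_def)
  have coords: "0 \<le> ret v i \<and> ret v i \<le> M" if i: "i \<in> {1..n-1}" for i
  proof (cases "\<epsilon> \<le> T")
    case True
    then have "t = 0" by (simp add: t_def)
    moreover have "c * v i \<le> v i" using c0 v i by (simp add: mult_left_le_one_le)
    moreover have "0 \<le> v i" "v i \<le> M" using v i by auto
    ultimately show ?thesis using rv[of i] c0 by auto
  next
    case False
    have "T < 2*pi" using False eps pi_gt_zero by linarith
    then have "c = 1" by (simp add: c_def)
    have "t \<le> \<epsilon> - T"
    proof -
      have "1 \<le> real (n-1)" using n3 by simp
      then have "(\<epsilon> - T) / real (n-1) \<le> (\<epsilon> - T) / 1" using False by (intro divide_left_mono) auto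
      then show ?thesis using False by (simp add: t_def)
    qed
    then show ?thesis using rv[of i] \<open>c = 1\<close> vT[OF i] v i t0 Mb by auto
  qed
  have sum: "(\<Sum>i\<in>{1..n-1}. ret v i) = c * T + max 0 (\<epsilon> - T)"
    using n1 by (simp add: rv sum.distrib sum_distrib_left[symmetric] T_def t_def)
  have sb: "\<epsilon> \<le> c * T + max 0 (\<epsilon> - T) \<and> c * T + max 0 (\<epsilon> - T) \<le> 2*pi"
  proof (cases "T \<le> 2*pi")
    case True
    then have "c = 1" by (simp add: c_def)
    then show ?thesis using True eps pi_gt_zero by auto
  next
    case False
    then have "T > 0" using pi_gt_zero by linarith
    then have "c * T = 2*pi" using False by (simp add: c_def)
    moreover have "max 0 (\<epsilon> - T) = 0" using False eps pi_gt_zero by auto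
    ultimately show ?thesis using eps pi_gt_zero by auto
  qed
  show ?thesis unfolding Dom_def using coords sum sb by auto
qed

lemma ret_id: "v \<in> Dom \<Longrightarrow> ret v i = v i"
proof -
  assume v: "v \<in> Dom"
  define T where "T = (\<Sum>j\<in>{1..n-1}. v j)"
  have "\<epsilon> \<le> T" "T \<le> 2*pi" using v by (auto simp: Dom_def T_def)
  then have "max (2*pi) T = 2*pi" "max 0 (\<epsilon> - T) = 0" by auto
  then show ?thesis unfolding ret_def T_def[symmetric] by simp
qed

lemma max_ne0: "max (2*pi) t \<noteq> (0::real)"
proof -
  have "0 < max (2*pi) t" by (rule less_le_trans[OF _ max.cobounded1]) simp
  then show ?thesis by simp
qed

lemma ret_cont: "continuous_on X (\<lambda>v. ret v i)"
  unfolding ret_def by (intro continuous_intros) (use n3 max_ne0 in auto)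

lemma sig_cont: "continuous_on X (\<lambda>u. sig u k)"
proof (cases "n \<le> k")
  case True then show ?thesis by (simp add: sig_def)
next
  case False then show ?thesis by (simp add: sig_def) (intro continuous_intros)
qed

lemma gsig_cont: "continuous_on X (\<lambda>u. \<gamma> (sig u k))"
  by (rule continuous_on_compose2[OF gcont sig_cont]) auto

lemma side_cont: "continuous_on X (\<lambda>u. side u i)"
  unfolding side_def by (intro continuous_intros gsig_cont)

lemma D_cont: "continuous_on X (\<lambda>u. D u)"
  unfolding D_def by (intro continuous_intros side_cont)

lemma uu_cont: "continuous_on X (\<lambda>u. uu u i)"
  unfolding uu_def by (intro continuous_intros sig_cont)

lemma w_cont: "continuous_on Dom (\<lambda>u. w u i)"
  unfolding w_def by (intro continuous_intros side_cont D_cont) (use D_pos in force)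

lemma Nn_cont: "continuous_on Dom (\<lambda>u. Nn u)"
  unfolding Nn_def by (intro continuous_intros w_cont uu_cont)

lemma Pp_cont: "continuous_on Dom (\<lambda>u. Pp u)"
  unfolding Pp_def by (intro continuous_intros w_cont uu_cont)

lemma Gm_cont: "continuous_on Dom (\<lambda>u. Gm u i)"
  unfolding Gm_def hh_def by (intro continuous_intros w_cont uu_cont Nn_cont Pp_cont)

lemma solution:
  "\<exists>\<sigma> c. \<sigma> 0 = 0 \<and> \<sigma> n = 2*pi \<and> (\<forall>i<n. \<sigma> i < \<sigma> (Suc i)) \<and> c > 0 \<and>
      (\<forall>i\<in>{1..n}. cmod (\<gamma> (\<sigma> i) - \<gamma> (\<sigma> (i - 1))) = c * a i)"
proof -
  define m where "m = n - 1"
  define C where "C = {x::nat\<Rightarrow>real. (\<forall>i<m. 0 \<le> x i \<and> x i \<le> 1) \<and> (\<forall>i. m \<le> i \<longrightarrow> x i = 0)}"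
  define emb where "emb x = (\<lambda>i. M * x (i - 1))" for x :: "nat \<Rightarrow> real"
  define f where "f x = (\<lambda>i. if i < m then Gm (ret (emb x)) (Suc i) / M else 0)" for x
  have Mp: "0 < M" by (rule M_pos)
  have embC: "\<forall>i\<in>{1..n-1}. 0 \<le> emb x i \<and> emb x i \<le> M" if "x \<in> C" for x
  proof
    fix i assume i: "i \<in> {1..n-1}"
    then have "i - 1 < m" by (auto simp: m_def)
    then show "0 \<le> emb x i \<and> emb x i \<le> M" using that Mp by (auto simp: C_def emb_def)
  qed
  have RD: "ret (emb x) \<in> Dom" if "x \<in> C" for x
    by (rule ret_Dom[OF embC[OF that]])
  have GD: "Gm (ret (emb x)) \<in> Dom" if "x \<in> C" for x
    by (rule Gm_Dom[OF RD[OF that]])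
  have fx: "\<exists>x\<in>C. \<forall>i<m. f x i = x i"
    unfolding C_def
  proof (rule brouwer_nat)
    fix i assume i: "i < m"
    have eq: "(\<lambda>x. f x i) = (\<lambda>x. Gm (ret (emb x)) (Suc i) / M)" using i by (simp add: f_def)
    have ce0: "continuous_on UNIV emb" unfolding emb_def
      by (intro continuous_on_coordinatewise_then_product continuous_intros)
    have ce: "continuous_on UNIV (\<lambda>x. ret (emb x))"
      by (intro continuous_on_coordinatewise_then_product continuous_on_compose2[OF ret_cont ce0]) auto
    show "continuous_on {x. (\<forall>i<m. 0 \<le> x i \<and> x i \<le> 1) \<and> (\<forall>i. m \<le> i \<longrightarrow> x i = 0)} (\<lambda>x. f x i)"
      unfolding eq C_def[symmetric]
      by (intro continuous_intros continuous_on_compose2[OF Gm_cont continuous_on_subset[OF ce]])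
        (use RD Mp in auto)
  next
    fix x :: "nat \<Rightarrow> real" and i :: nat assume x: "x \<in> {x. (\<forall>i<m. 0 \<le> x i \<and> x i \<le> 1) \<and> (\<forall>i. m \<le> i \<longrightarrow> x i = 0)}" and i: "i < m"
    have "Suc i \<in> {1..n-1}" using i by (auto simp: m_def)
    then have "0 \<le> Gm (ret (emb x)) (Suc i) \<and> Gm (ret (emb x)) (Suc i) \<le> M"
      using GD[of x] x by (auto simp: Dom_def C_def)
    then show "0 \<le> f x i \<and> f x i \<le> 1" using i Mp by (simp add: f_def)
  qed
  then obtain x where x: "x \<in> C" and fxx: "\<forall>i<m. f x i = x i" by blast
  define v where "v = emb x"
  define u where "u = ret v"
  have uD: "u \<in> Dom" unfolding u_def v_def by (rule ret_Dom[OF embC[OF x]])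
  have GuD: "Gm u \<in> Dom" by (rule Gm_Dom[OF uD])
  have Gv: "Gm u i = v i" if "i \<in> {1..n-1}" for i
  proof -
    have "i - 1 < m" "Suc (i - 1) = i" using that by (auto simp: m_def)
    then have "Gm (ret (emb x)) i / M = x (i - 1)" using fxx by (metis f_def)
    then show ?thesis using Mp by (simp add: u_def v_def emb_def field_simps)
  qed
  have vD: "v \<in> Dom"
  proof -
    have "(\<Sum>i\<in>{1..n-1}. Gm u i) = (\<Sum>i\<in>{1..n-1}. v i)" by (rule sum.cong) (auto simp: Gv)
    then show ?thesis using GuD Gv by (auto simp: Dom_def)
  qed
  have uv: "u i = v i" for i unfolding u_def by (rule ret_id[OF vD])
  have h0: "\<forall>i\<in>{1..n-1}. hh u i = 0"
    using Gv uv by (simp add: Gm_def)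
  have w0: "\<forall>i\<in>{1..n}. w u i = 0" by (rule fixed_w[OF uD h0])
  define c where "c = D u / S"
  have cpos: "0 < c" using D_pos[OF uD] S_pos by (simp add: c_def)
  have sides: "side u i = c * a i" if "i \<in> {1..n}" for i
  proof -
    have "side u i / D u = a i / S" using w0 that by (simp add: w_def q_def)
    then show ?thesis using D_pos[OF uD] S_pos by (simp add: c_def field_simps)
  qed
  show ?thesis
  proof (intro exI[of _ "sig u"] exI[of _ c] conjI allI impI ballI)
    show "sig u 0 = 0" by (rule sig0)
    show "sig u n = 2*pi" by (rule sign)
    show "0 < c" by (rule cpos)
    fix i assume "i \<in> {1..n}"
    then show "cmod (\<gamma> (sig u i) - \<gamma> (sig u (i - 1))) = c * a i" using sides by (simp add: side_def)
  next
    fix i assume i: "i < n"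
    have si: "Suc i \<in> {1..n}" using i by auto
    have "sig u i \<le> sig u (Suc i)" by (rule sig_mono[OF uD i])
    moreover have "side u (Suc i) > 0" using sides[OF si] cpos apos[OF si] by simp
    then have "sig u (Suc i) \<noteq> sig u i" by (auto simp: side_def)
    ultimately show "sig u i < sig u (Suc i)" by simp
  qed
qed

end



theorem theorem1p2:
  fixes \<gamma> :: "real \<Rightarrow> complex" and a :: "nat \<Rightarrow> real" and n :: nat
  assumes "circle_param \<gamma>"
    and "cont_turning_tangents_at (\<gamma> ` {0..2*pi}) (\<gamma> 0)"
    and "n \<ge> 3"
    and "\<forall>i\<in>{1..n}. a i > 0"
    and "\<forall>i\<in>{1..n}. a i < (\<Sum>j\<in>{1..n} - {i}. a j)"
  shows "\<exists>\<sigma> :: nat \<Rightarrow> real. \<exists>c::real. \<sigma> 0 = 0 \<and> \<sigma> n = 2*pi \<and>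
           (\<forall>i<n. \<sigma> i < \<sigma> (Suc i)) \<and> c > 0 \<and>
           (\<forall>i\<in>{1..n}. cmod (\<gamma> (\<sigma> i) - \<gamma> (\<sigma> (i - 1))) = c * a i)"
proof -
  note cp = assms(1)
  have gcont: "continuous_on UNIV \<gamma>" and per: "\<And>t. \<gamma> (t + 2*pi) = \<gamma> t" and ginj: "inj_on \<gamma> {0..<2*pi}"
    using cp by (auto simp: circle_param_def)
  define S where "S = (\<Sum>i\<in>{1..n}. a i)"
  have fin: "finite ((\<lambda>j. a j / S) ` {1..n})" by simp
  have ne: "(\<lambda>j. a j / S) ` {1..n} \<noteq> {}" using assms(3) by auto
  define Q where "Q = Max ((\<lambda>j. a j / S) ` {1..n})"
  have Spos: "0 < S" unfolding S_def by (rule sum_pos) (use assms(3,4) in auto)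
  have half: "a j / S < 1/2" if j: "j \<in> {1..n}" for j
  proof -
    have "S = a j + (\<Sum>i\<in>{1..n} - {j}. a i)" unfolding S_def using j by (simp add: sum.remove)
    then have "2 * a j < S" using assms(5) j by auto
    then show ?thesis using Spos by (simp add: divide_less_eq)
  qed
  have Qlt: "Q < 1/2" unfolding Q_def using half fin ne by (subst Max_less_iff) auto
  have Qge: "a j / S \<le> Q" if "j \<in> {1..n}" for j unfolding Q_def using fin that by (intro Max_ge) auto
  have Q0: "0 \<le> Q"
  proof -
    have "1 \<in> {1..n}" using assms(3) by simp
    then show ?thesis using Qge[of 1] assms(4) Spos by (meson divide_nonneg_pos less_imp_le order_trans)
  qed
  define r where "r = (Q + 1/2) / 2"
  define \<kappa> where "\<kappa> = r / (1 - r)"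
  have r: "Q < r" "r < 1/2" "0 < r" using Qlt Q0 by (auto simp: r_def)
  have k0: "0 < \<kappa>" "\<kappa> < 1" using r by (auto simp: \<kappa>_def field_simps)
  have kr: "\<kappa> / (1 + \<kappa>) = r" using r by (simp add: \<kappa>_def field_simps)
  obtain e \<phi> c1 c2 where e: "0 < e" "e \<le> pi/2" and c1: "0 < c1" and kc: "\<kappa> * c2 \<le> c1"
    and mono: "mono_on {-e..e} \<phi>"
    and bnd: "\<forall>s\<in>{-e..e}. \<forall>t\<in>{-e..e}. c1 * \<bar>\<phi> s - \<phi> t\<bar> \<le> cmod (\<gamma> s - \<gamma> t) \<and> cmod (\<gamma> s - \<gamma> t) \<le> c2 * \<bar>\<phi> s - \<phi> t\<bar>"
    using tangent_local[OF cp assms(2) k0] by blast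
  interpret cfg \<gamma> a n e \<kappa>
  proof
    show "continuous_on UNIV \<gamma>" by (rule gcont)
    show "\<gamma> (t + 2*pi) = \<gamma> t" for t by (rule per)
    show "inj_on \<gamma> {0..<2*pi}" by (rule ginj)
    show "3 \<le> n" by (rule assms(3))
    show "0 < a i" if "i \<in> {1..n}" for i using assms(4) that by auto
    show "0 < e" "e \<le> pi/2" by (rule e(1), rule e(2))
    show "0 \<le> \<kappa>" using k0 by simp
    show "a j / (\<Sum>i\<in>{1..n}. a i) < \<kappa> / (1 + \<kappa>)" if "j \<in> {1..n}" for j
      using Qge[OF that] r kr by (simp add: S_def)
    show "\<kappa> * (\<Sum>i\<in>{1..n}-{j}. cmod (\<gamma> (\<sigma> i) - \<gamma> (\<sigma> (i-1)))) \<le> cmod (\<gamma> (\<sigma> j) - \<gamma> (\<sigma> (j-1)))"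
      if "\<sigma> 0 = 0" "\<sigma> n = 2*pi" "\<And>i. i < n \<Longrightarrow> \<sigma> i \<le> \<sigma> (Suc i)" "1 \<le> j" "j \<le> n"
        "2*pi - e \<le> \<sigma> j - \<sigma> (j-1)" for \<sigma> j
      by (rule chain_flat[of \<gamma> e \<phi> c1 c2 \<kappa> \<sigma> n j]) (use per mono bnd kc k0 that in auto)
  qed
  show ?thesis by (rule solution)
qed


end
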